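(* Let $\mathcal N : L(\mathbb C^{2^{n}})\to L(\mathbb C^{2^{k}})$ be a linear map. Let $\rho$ be an $n$-qubit density matrix and let $U^{\rho}$ be an $(r+n)$-qubit unitary preparing a purification of $\rho$, i.e. $U^{\rho}\ket{0^{r+n}}=\ket{\psi}$ with $\operatorname{Tr}_{\mathbb C^{2^{r}}}\ket{\psi}\bra{\psi}=\rho$ (the first $r$ qubits being the purifying register). Assume $U_{\mathcal N}$ is an $(m+n+k)$-qubit unitary which is an $(\alpha,m,\epsilon)$-block encoding of $\Lambda_{\mathcal N}^{\mathrm T_1}$. Consider $m+r+n+k$ qubits arranged as registers of sizes $m$, $r$, $n$, $k$ (in this order), and the unitary $$V=\bigl(\mathbb I_m\otimes U^{\rho\dagger}\otimes\mathbb I_k\bigr)\bigl(U_{\mathcal N}\otimes\mathbb I_r\bigr)\bigl(\mathbb I_m\otimes U^{\rho}\otimes\mathbb I_k\bigr),$$ where $U^{\rho}$ and $U^{\rho\dagger}$ act on the $r$- and $n$-qubit registers, and $U_{\mathcal N}\otimes\mathbb I_r$ denotes $U_{\mathcal N}$ acting on the $m$-, $n$- and $k$-qubit registers and the identity on the $r$-qubit register. Then $V$ is an $(\alpha,m+r+n,\epsilon)$-block encoding of $\mathcal N(\rho)$, i.e. $\bigl\|\mathcal N(\rho)-\alpha(\bra{0^{m+r+n}}\otimes\mathbb I_k)V(\ket{0^{m+r+n}}\otimes\mathbb I_k)\bigr\|_\infty\le\epsilon$.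
   Context: $\|\cdot\|_\infty$ is the operator norm and $\mathbb I_j$ the identity on $j$ qubits. Block encoding: for an $n$-qubit matrix $A$, an $(m+n)$-qubit unitary $U$ is an $(\alpha,m,\epsilon)$-block encoding of $A$ (with $\alpha,\epsilon\ge 0$) if $\bigl\|A-\alpha(\bra{0^m}\otimes\mathbb I_n)U(\ket{0^m}\otimes\mathbb I_n)\bigr\|_\infty\le\epsilon$. For a linear map $\mathcal N:L(\mathcal X)\to L(\mathcal Y)$, its Choi matrix is $\Lambda_{\mathcal N}=(\mathcal I\otimes\mathcal N)(\ket{\Phi^+}\bra{\Phi^+})\in L(\mathcal X\otimes\mathcal Y)$, where $\ket{\Phi^+}=\sum_i\ket{ii}$ is the unnormalized maximally entangled vector on $\mathcal X\otimes\mathcal X$ (computational basis). $\Lambda_{\mathcal N}^{\mathrm T_1}$ denotes the partial transpose (in the computational basis) of $\Lambda_{\mathcal N}$ on the first tensor factor $\mathcal X$. *)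

theory Defs
  imports "Jordan_Normal_Form.Matrix"
begin

text \<open>Qubit registers are ordered big-endian: in a tensor product A (x) B the
  index of the first factor is the most significant one.\<close>

definition cadj :: "complex mat \<Rightarrow> complex mat" where
  "cadj A = mat (dim_col A) (dim_row A) (\<lambda>(i,j). cnj (A $$ (j,i)))"

definition unitary :: "nat \<Rightarrow> complex mat \<Rightarrow> bool" where
  "unitary d U \<longleftrightarrow> U \<in> carrier_mat d d \<and> cadj U * U = 1\<^sub>m d \<and> U * cadj U = 1\<^sub>m d"

definition kron :: "complex mat \<Rightarrow> complex mat \<Rightarrow> complex mat" where
  "kron A B = mat (dim_row A * dim_row B) (dim_col A * dim_col B)
     (\<lambda>(i,j). A $$ (i div dim_row B, j div dim_col B) * B $$ (i mod dim_row B, j mod dim_col B))"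

definition vnorm :: "complex vec \<Rightarrow> real" where
  "vnorm v = sqrt (\<Sum>i<dim_vec v. (cmod (v $ i))\<^sup>2)"

definition op_norm :: "complex mat \<Rightarrow> real" where
  "op_norm A = Sup {vnorm (A *\<^sub>v v) | v. v \<in> carrier_vec (dim_col A) \<and> vnorm v \<le> 1}"

definition ket0 :: "nat \<Rightarrow> complex mat" where
  "ket0 m = mat (2^m) 1 (\<lambda>(i,j). if i = 0 then 1 else 0)"

definition bra0 :: "nat \<Rightarrow> complex mat" where
  "bra0 m = mat 1 (2^m) (\<lambda>(i,j). if j = 0 then 1 else 0)"

definition block_encoding :: "real \<Rightarrow> nat \<Rightarrow> nat \<Rightarrow> real \<Rightarrow> complex mat \<Rightarrow> complex mat \<Rightarrow> bool" where
  "block_encoding \<alpha> m n \<epsilon> A U \<longleftrightarrow>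
     0 \<le> \<alpha> \<and> 0 \<le> \<epsilon> \<and> A \<in> carrier_mat (2^n) (2^n) \<and> unitary (2^(m+n)) U \<and>
     op_norm (A - complex_of_real \<alpha> \<cdot>\<^sub>m
        (kron (bra0 m) (1\<^sub>m (2^n)) * U * kron (ket0 m) (1\<^sub>m (2^n)))) \<le> \<epsilon>"

definition lin_map :: "nat \<Rightarrow> nat \<Rightarrow> (complex mat \<Rightarrow> complex mat) \<Rightarrow> bool" where
  "lin_map dX dY N \<longleftrightarrow>
     (\<forall>A \<in> carrier_mat dX dX. N A \<in> carrier_mat dY dY) \<and>
     (\<forall>A \<in> carrier_mat dX dX. \<forall>B \<in> carrier_mat dX dX. N (A + B) = N A + N B) \<and>
     (\<forall>c. \<forall>A \<in> carrier_mat dX dX. N (c \<cdot>\<^sub>m A) = c \<cdot>\<^sub>m N A)"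

definition outer :: "complex vec \<Rightarrow> complex vec \<Rightarrow> complex mat" where
  "outer u v = mat (dim_vec u) (dim_vec v) (\<lambda>(i,j). u $ i * cnj (v $ j))"

definition density_matrix :: "nat \<Rightarrow> complex mat \<Rightarrow> bool" where
  "density_matrix d \<rho> \<longleftrightarrow> \<rho> \<in> carrier_mat d d \<and>
     (\<forall>v \<in> carrier_vec d. Im (conjugate v \<bullet> (\<rho> *\<^sub>v v)) = 0 \<and> 0 \<le> Re (conjugate v \<bullet> (\<rho> *\<^sub>v v))) \<and>
     (\<Sum>i<d. \<rho> $$ (i,i)) = 1"

definition ptrace1 :: "nat \<Rightarrow> nat \<Rightarrow> complex mat \<Rightarrow> complex mat" where
  "ptrace1 dA dB M = mat dB dB (\<lambda>(i,j). \<Sum>a<dA. M $$ (a*dB + i, a*dB + j))"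

definition ptranspose1 :: "nat \<Rightarrow> nat \<Rightarrow> complex mat \<Rightarrow> complex mat" where
  "ptranspose1 dA dB M = mat (dA*dB) (dA*dB)
     (\<lambda>(p,q). M $$ ((q div dB)*dB + p mod dB, (p div dB)*dB + q mod dB))"

text \<open>The map (I (x) N) applied to M \<in> L(C^dX (x) C^dX): blockwise application of N,
  i.e. (I (x) N)(\<Sum>ij |i><j| (x) M_ij) = \<Sum>ij |i><j| (x) N(M_ij).\<close>
definition block :: "nat \<Rightarrow> complex mat \<Rightarrow> nat \<Rightarrow> nat \<Rightarrow> complex mat" where
  "block d M i j = mat d d (\<lambda>(a,b). M $$ (i*d + a, j*d + b))"

definition id_tensor_map :: "nat \<Rightarrow> nat \<Rightarrow> (complex mat \<Rightarrow> complex mat) \<Rightarrow> complex mat \<Rightarrow> complex mat" where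
  "id_tensor_map dX dY N M = mat (dX*dY) (dX*dY)
     (\<lambda>(p,q). N (block dX M (p div dY) (q div dY)) $$ (p mod dY, q mod dY))"

text \<open>Unnormalised maximally entangled vector \<Sum>i |ii>.\<close>
definition phi_plus :: "nat \<Rightarrow> complex vec" where
  "phi_plus d = vec (d*d) (\<lambda>p. if p div d = p mod d then 1 else 0)"

definition choi :: "nat \<Rightarrow> nat \<Rightarrow> (complex mat \<Rightarrow> complex mat) \<Rightarrow> complex mat" where
  "choi dX dY N = id_tensor_map dX dY N (outer (phi_plus dX) (phi_plus dX))"

text \<open>M acting on A (x) C, extended by the identity on a middle register B:
  the resulting operator on A (x) B (x) C.\<close>
definition embed_mid :: "nat \<Rightarrow> nat \<Rightarrow> nat \<Rightarrow> complex mat \<Rightarrow> complex mat" where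
  "embed_mid dA dB dC M = mat (dA*dB*dC) (dA*dB*dC)
     (\<lambda>(p,q). let a = p div (dB*dC); b = (p div dC) mod dB; c = p mod dC;
                  a' = q div (dB*dC); b' = (q div dC) mod dB; c' = q mod dC
              in if b = b' then M $$ (a*dC + c, a'*dC + c') else 0)"

end

theory Submission
  imports Defs "HOL-Analysis.L2_Norm"
begin

lemma sum_split: fixes A B :: nat shows "(\<Sum>x<A*B. f x :: 'a::comm_monoid_add) = (\<Sum>a<A. \<Sum>b<B. f (a*B+b))"
proof (induction A)
  case 0 then show ?case by simp
next
  case (Suc A)
  have "(\<Sum>x<Suc A*B. f x) = (\<Sum>x<A*B. f x) + (\<Sum>x\<in>{A*B..<A*B+B}. f x)"
    by (simp add: add.commute sum.atLeastLessThan_concat[symmetric] lessThan_atLeast0)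
  also have "(\<Sum>x\<in>{A*B..<A*B+B}. f x) = (\<Sum>b<B. f (A*B+b))"
    using sum.shift_bounds_nat_ivl[of f 0 "A*B" B] by (simp add: lessThan_atLeast0 add.commute)
  finally show ?case using Suc by simp
qed

lemma mult_entry: "dim_col A = dim_row B \<Longrightarrow> i < dim_row A \<Longrightarrow> j < dim_col B \<Longrightarrow>
  (A*B) $$ (i,j) = (\<Sum>l<dim_row B. A$$(i,l) * B$$(l,j))"
  by (simp add: scalar_prod_def lessThan_atLeast0 row_def)

lemma dm1 [simp]: "(d::nat) < K \<Longrightarrow> (x*K+d) div K = x"
  by simp
lemma dm2 [simp]: "(d::nat) < K \<Longrightarrow> (x*K+d) mod K = d"
  by simp
lemma lt_comb: "(i::nat) < N \<Longrightarrow> c < K \<Longrightarrow> i*K+c < N*K"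
proof -
  assume "i < N" "c < K"
  then have "i*K + c < i*K + K" by simp
  also have "\<dots> = (i+1)*K" by simp
  also have "\<dots> \<le> N*K" using \<open>i<N\<close> by (intro mult_right_mono) auto
  finally show ?thesis .
qed

lemma cadj_dim [simp]: "dim_row (cadj A) = dim_col A" "dim_col (cadj A) = dim_row A"
  by (simp_all add: cadj_def)
lemma cadj_entry [simp]: "i < dim_col A \<Longrightarrow> j < dim_row A \<Longrightarrow> cadj A $$ (i,j) = cnj (A $$ (j,i))"
  by (simp add: cadj_def)
lemma cadj_carrier: "A \<in> carrier_mat a b \<Longrightarrow> cadj A \<in> carrier_mat b a"
  by auto
lemma cadj_one [simp]: "cadj (1\<^sub>m d) = 1\<^sub>m d"
  by (rule eq_matI) auto
lemma cadj_cadj [simp]: "cadj (cadj A) = A"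
  by (rule eq_matI) auto
lemma cadj_mult: "dim_col A = dim_row B \<Longrightarrow> cadj (A * B) = cadj B * cadj A"
  by (rule eq_matI) (auto simp del: index_mult_mat(1) simp add: mult_entry cnj_sum mult.commute)

lemma kron_dim [simp]: "dim_row (kron A B) = dim_row A * dim_row B" "dim_col (kron A B) = dim_col A * dim_col B"
  by (simp_all add: kron_def)
lemma kron_entry [simp]: "i < dim_row A * dim_row B \<Longrightarrow> j < dim_col A * dim_col B \<Longrightarrow>
   kron A B $$ (i,j) = A $$ (i div dim_row B, j div dim_col B) * B $$ (i mod dim_row B, j mod dim_col B)"
  by (simp add: kron_def)

lemma cadj_kron: "cadj (kron A B) = kron (cadj A) (cadj B)"
proof (rule eq_matI)
  fix i j assume i: "i < dim_row (kron (cadj A) (cadj B))" and j: "j < dim_col (kron (cadj A) (cadj B))"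
  then have "dim_col B > 0" "dim_row B > 0" by (auto intro!: Nat.gr0I)
  then show "cadj (kron A B) $$ (i, j) = kron (cadj A) (cadj B) $$ (i, j)"
    using i j by (simp add: less_mult_imp_div_less)
qed auto

lemma kron_mult: assumes "dim_col A = dim_row C" "dim_col B = dim_row D"
  shows "kron A B * kron C D = kron (A*C) (B*D)"
proof (rule eq_matI)
  fix i j assume i: "i < dim_row (kron (A*C) (B*D))" and j: "j < dim_col (kron (A*C) (B*D))"
  then have p: "dim_col D > 0" "dim_row B > 0" by (auto intro!: Nat.gr0I)
  have i1: "i div dim_row B < dim_row A" "i mod dim_row B < dim_row B" using i p by (auto simp: less_mult_imp_div_less)
  have j1: "j div dim_col D < dim_col C" "j mod dim_col D < dim_col D" using j p by (auto simp: less_mult_imp_div_less)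
  have "(kron A B * kron C D) $$ (i,j) = (\<Sum>l<dim_row C * dim_row D. kron A B $$ (i,l) * kron C D $$ (l,j))"
    using i j assms by (simp del: index_mult_mat(1) add: mult_entry)
  also have "\<dots> = (\<Sum>x<dim_row C. \<Sum>y<dim_row D. kron A B $$ (i,x*dim_row D+y) * kron C D $$ (x*dim_row D+y,j))"
    by (rule sum_split)
  also have "\<dots> = (\<Sum>x<dim_row C. \<Sum>y<dim_row D. (A$$(i div dim_row B, x) * C $$ (x, j div dim_col D)) * (B $$ (i mod dim_row B, y) * D $$ (y, j mod dim_col D)))"
    proof (intro sum.cong refl)
    fix x y assume "x \<in> {..<dim_row C}" "y \<in> {..<dim_row D}"
    then have l: "x*dim_row D + y < dim_row C * dim_row D" "y < dim_row D" by (auto intro: lt_comb)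
    show "kron A B $$ (i,x*dim_row D+y) * kron C D $$ (x*dim_row D+y,j) = (A$$(i div dim_row B, x) * C $$ (x, j div dim_col D)) * (B $$ (i mod dim_row B, y) * D $$ (y, j mod dim_col D))"
      using i j assms l by (simp del: dm1 dm2 add: dm1[OF l(2)] dm2[OF l(2)] mult_ac)
  qed
  also have "\<dots> = (A*C) $$ (i div dim_row B, j div dim_col D) * (B*D) $$ (i mod dim_row B, j mod dim_col D)"
    using i1 j1 assms by (simp del: index_mult_mat(1) add: mult_entry sum_product)
  finally show "(kron A B * kron C D) $$ (i,j) = kron (A*C) (B*D) $$ (i,j)"
    using i j by simp
qed (use assms in auto)

lemma kron_one: "kron (1\<^sub>m a) (1\<^sub>m b) = 1\<^sub>m (a*b)"
proof (rule eq_matI)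
  fix i j assume i: "i < dim_row (1\<^sub>m (a*b))" and j: "j < dim_col (1\<^sub>m (a*b))"
  then have p: "b > 0" by (auto intro!: Nat.gr0I)
  have "(i div b = j div b \<and> i mod b = j mod b) = (i = j)"
    by (metis div_mult_mod_eq)
  then show "kron (1\<^sub>m a) (1\<^sub>m b) $$ (i, j) = 1\<^sub>m (a * b) $$ (i, j)"
    using i j p by (auto simp: less_mult_imp_div_less)
qed auto

lemma unitary_kron: assumes "unitary a A" "unitary b B" shows "unitary (a*b) (kron A B)"
  using assms unfolding unitary_def
  by (auto simp: cadj_kron kron_mult kron_one)

lemma unitary_mult: assumes "unitary d A" "unitary d B" shows "unitary d (A*B)"
proof -
  have A: "A \<in> carrier_mat d d" "cadj A \<in> carrier_mat d d" and B: "B \<in> carrier_mat d d" "cadj B \<in> carrier_mat d d"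
    using assms unfolding unitary_def by auto
  have "cadj (A*B) * (A*B) = cadj B * (cadj A * A) * B"
    using A B by (simp add: cadj_mult assoc_mult_mat[of _ d d _ d _ d])
  also have "\<dots> = 1\<^sub>m d" using assms B unfolding unitary_def by simp
  finally have 1: "cadj (A*B) * (A*B) = 1\<^sub>m d" .
  have "(A*B) * cadj (A*B) = A * (B * cadj B) * cadj A"
    using A B by (simp add: cadj_mult assoc_mult_mat[of _ d d _ d _ d])
  also have "\<dots> = 1\<^sub>m d" using assms A unfolding unitary_def by simp
  finally show ?thesis using 1 A B unfolding unitary_def by auto
qed

lemma decomp3: assumes "(i::nat) < A*B*C"
  shows "\<exists>x b z. x < A \<and> b < B \<and> z < C \<and> i = (x*B+b)*C+z"
proof -
  have p: "C > 0" "B > 0" using assms by (auto intro!: Nat.gr0I)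
  have "i div C < A*B" using assms by (simp add: less_mult_imp_div_less)
  then have "i div C div B < A" by (simp add: less_mult_imp_div_less)
  moreover have "i = ((i div C div B)*B + (i div C) mod B)*C + i mod C" by simp
  ultimately show ?thesis using p by (intro exI[of _ "i div C div B"] exI[of _ "(i div C) mod B"] exI[of _ "i mod C"]) auto
qed

lemma decomp3_div: assumes "b < (B::nat)" "z < C"
  shows "((x*B+b)*C+z) div C = x*B+b" "((x*B+b)*C+z) mod C = z"
    "((x*B+b)*C+z) div (B*C) = x" "((x*B+b)*C+z) div C mod B = b"
proof -
  show "((x*B+b)*C+z) div C = x*B+b" "((x*B+b)*C+z) mod C = z" using assms by auto
  have "(x*B+b)*C+z = x*(B*C) + (b*C+z)" by (simp add: algebra_simps)
  moreover have "b*C+z < B*C" using assms by (rule lt_comb)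
  ultimately show "((x*B+b)*C+z) div (B*C) = x" by (metis dm1)
  show "((x*B+b)*C+z) div C mod B = b" using assms by auto
qed

lemma decomp3_inj: assumes "b < (B::nat)" "z < C" "b' < B" "z' < C"
  shows "((x*B+b)*C+z = (y*B+b')*C+z') = (x = y \<and> b = b' \<and> z = z')"
  by (metis assms decomp3_div)

lemma sum_if2: assumes "b < (B::nat)"
  shows "(\<Sum>b''<B. (if b = b'' then F b'' else 0) * (if b'' = b' then G b'' else 0)) = (if b = b' then F b * G b else (0::'a::comm_semiring_1))"
proof -
  have "(\<Sum>b''<B. (if b = b'' then F b'' else 0) * (if b'' = b' then G b'' else 0)) =
     (\<Sum>b''<B. if b = b'' then (if b = b' then F b * G b else 0) else 0)"
    by (intro sum.cong refl) auto
  also have "\<dots> = (if b = b' then F b * G b else 0)" using assms by (simp add: sum.delta)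
  finally show ?thesis .
qed

lemma em_dim [simp]: "dim_row (embed_mid A B C W) = A*B*C" "dim_col (embed_mid A B C W) = A*B*C"
  by (simp_all add: embed_mid_def)

lemma em_entry: assumes "x < A" "y < A" "b < B" "b' < B" "z < C" "z' < C"
  shows "embed_mid A B C W $$ ((x*B+b)*C+z, (y*B+b')*C+z') = (if b = b' then W$$(x*C+z, y*C+z') else 0)"
proof -
  have "(x*B+b)*C+z < A*B*C" "(y*B+b')*C+z' < A*B*C" using assms by (auto intro!: lt_comb)
  then show ?thesis using assms unfolding embed_mid_def by (simp add: decomp3_div Let_def)
qed

lemma em_mult: assumes W: "W \<in> carrier_mat (A*C) (A*C)" and W': "W' \<in> carrier_mat (A*C) (A*C)"
  shows "embed_mid A B C W * embed_mid A B C W' = embed_mid A B C (W*W')"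
proof (rule eq_matI)
  fix i j assume "i < dim_row (embed_mid A B C (W*W'))" "j < dim_col (embed_mid A B C (W*W'))"
  then obtain x b z y b' z' where i: "x < A" "b < B" "z < C" "i = (x*B+b)*C+z"
     and j: "y < A" "b' < B" "z' < C" "j = (y*B+b')*C+z'"
    using decomp3 by (metis em_dim)
  have "(embed_mid A B C W * embed_mid A B C W') $$ (i,j) =
      (\<Sum>l<A*B*C. embed_mid A B C W $$ (i,l) * embed_mid A B C W' $$ (l,j))"
    using i j by (simp del: index_mult_mat(1) add: mult_entry lt_comb)
  also have "\<dots> = (\<Sum>x'<A. \<Sum>b''<B. \<Sum>z''<C. embed_mid A B C W $$ (i,(x'*B+b'')*C+z'') * embed_mid A B C W' $$ ((x'*B+b'')*C+z'',j))"
    by (simp add: sum_split)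
  also have "\<dots> = (\<Sum>x'<A. \<Sum>z''<C. \<Sum>b''<B. embed_mid A B C W $$ (i,(x'*B+b'')*C+z'') * embed_mid A B C W' $$ ((x'*B+b'')*C+z'',j))"
    by (intro sum.cong refl sum.swap)
  also have "\<dots> = (\<Sum>x'<A. \<Sum>z''<C. \<Sum>b''<B. (if b = b'' then W $$ (x*C+z, x'*C+z'') else 0) * (if b'' = b' then W' $$ (x'*C+z'', y*C+z') else 0))"
    using i j by (intro sum.cong refl) (simp add: em_entry)
  also have "\<dots> = (if b = b' then (\<Sum>x'<A. \<Sum>z''<C. W $$ (x*C+z, x'*C+z'') * W' $$ (x'*C+z'', y*C+z')) else 0)"
    using i j by (simp add: sum_if2 if_distrib[of "\<lambda>f. sum f _"] cong: if_cong)
  also have "\<dots> = (if b = b' then (W*W') $$ (x*C+z, y*C+z') else 0)"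
    using i j W W' by (simp del: index_mult_mat(1) add: mult_entry lt_comb sum_split)
  also have "\<dots> = embed_mid A B C (W*W') $$ (i,j)"
    using i j by (simp add: em_entry)
  finally show "(embed_mid A B C W * embed_mid A B C W') $$ (i,j) = embed_mid A B C (W*W') $$ (i,j)" .
qed auto

lemma em_one: "embed_mid A B C (1\<^sub>m (A*C)) = 1\<^sub>m (A*B*C)"
proof (rule eq_matI)
  fix i j assume "i < dim_row (1\<^sub>m (A*B*C))" "j < dim_col (1\<^sub>m (A*B*C))"
  then obtain x b z y b' z' where i: "x < A" "b < B" "z < C" "i = (x*B+b)*C+z"
     and j: "y < A" "b' < B" "z' < C" "j = (y*B+b')*C+z'"
    using decomp3 by (metis index_one_mat(2,3))
  have "x*C+z < A*C" "y*C+z' < A*C" "i < A*B*C" "j < A*B*C" using i j by (auto intro!: lt_comb)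
  moreover have "(x*C+z = y*C+z') = (x = y \<and> z = z')" using i j
    by (metis dm1 dm2)
  ultimately show "embed_mid A B C (1\<^sub>m (A*C)) $$ (i,j) = 1\<^sub>m (A*B*C) $$ (i,j)"
    using i j by (simp add: em_entry decomp3_inj)
qed auto

lemma em_cadj: assumes W: "W \<in> carrier_mat (A*C) (A*C)"
  shows "cadj (embed_mid A B C W) = embed_mid A B C (cadj W)"
proof (rule eq_matI)
  fix i j assume "i < dim_row (embed_mid A B C (cadj W))" "j < dim_col (embed_mid A B C (cadj W))"
  then obtain x b z y b' z' where i: "x < A" "b < B" "z < C" "i = (x*B+b)*C+z"
     and j: "y < A" "b' < B" "z' < C" "j = (y*B+b')*C+z'"
    using decomp3 by (metis em_dim)
  have "x*C+z < A*C" "y*C+z' < A*C" "i < A*B*C" "j < A*B*C" using i j by (auto intro!: lt_comb)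
  then show "cadj (embed_mid A B C W) $$ (i,j) = embed_mid A B C (cadj W) $$ (i,j)"
    using i j W by (auto simp: em_entry)
qed auto

lemma unitary_em: assumes "unitary (A*C) W" shows "unitary (A*B*C) (embed_mid A B C W)"
  using assms unfolding unitary_def by (auto simp: em_cadj em_mult em_one cadj_carrier)

lemma ket0_dim [simp]: "dim_row (ket0 p) = 2^p" "dim_col (ket0 p) = 1"
  by (simp_all add: ket0_def)
lemma bra0_dim [simp]: "dim_row (bra0 p) = 1" "dim_col (bra0 p) = 2^p"
  by (simp_all add: bra0_def)

lemma ketk_entry: assumes "c < d" "l < 2^p*d"
  shows "kron (ket0 p) (1\<^sub>m d) $$ (l,c) = (if l = c then 1 else 0)"
proof -
  have "l div d < 2^p" using assms by (simp add: less_mult_imp_div_less)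
  then show ?thesis using assms by (cases "l = c") (auto simp: ket0_def div_eq_0_iff)
qed

lemma brak_entry: assumes "c < d" "l < 2^p*d"
  shows "kron (bra0 p) (1\<^sub>m d) $$ (c,l) = (if l = c then 1 else 0)"
proof -
  have "l div d < 2^p" using assms by (simp add: less_mult_imp_div_less)
  then show ?thesis using assms by (cases "l = c") (auto simp: bra0_def div_eq_0_iff)
qed

lemma block_extract: assumes Q: "Q \<in> carrier_mat (2^p*d) (2^p*d)" and c: "c < d" "c' < d"
  shows "(kron (bra0 p) (1\<^sub>m d) * Q * kron (ket0 p) (1\<^sub>m d)) $$ (c,c') = Q $$ (c,c')"
proof -
  have cl: "c < 2^p*d" "c' < 2^p*d" using c by (auto intro: less_le_trans)
  have "(kron (bra0 p) (1\<^sub>m d) * Q * kron (ket0 p) (1\<^sub>m d)) $$ (c,c') =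
     (\<Sum>l<2^p*d. (kron (bra0 p) (1\<^sub>m d) * Q) $$ (c,l) * kron (ket0 p) (1\<^sub>m d) $$ (l,c'))"
    using Q c by (simp del: index_mult_mat(1) add: mult_entry)
  also have "\<dots> = (\<Sum>l<2^p*d. if l = c' then (kron (bra0 p) (1\<^sub>m d) * Q) $$ (c,l) else 0)"
    using c by (intro sum.cong refl) (simp del: kron_entry add: ketk_entry)
  also have "\<dots> = (kron (bra0 p) (1\<^sub>m d) * Q) $$ (c,c')" using cl by (simp add: sum.delta')
  also have "\<dots> = (\<Sum>l<2^p*d. kron (bra0 p) (1\<^sub>m d) $$ (c,l) * Q $$ (l,c'))"
    using Q c cl by (simp del: index_mult_mat(1) add: mult_entry)
  also have "\<dots> = (\<Sum>l<2^p*d. if l = c then Q $$ (l,c') else 0)"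
    using c by (intro sum.cong refl) (simp del: kron_entry add: brak_entry)
  also have "\<dots> = Q $$ (c,c')" using cl by (simp add: sum.delta')
  finally show ?thesis .
qed

lemma collapse: assumes "0 < (M::nat)" "c < (K::nat)"
  shows "(\<Sum>u<M. \<Sum>s<(S::nat). \<Sum>d<K. if u = 0 then (if d = c then g s else 0) else 0) = (\<Sum>s<S. g s :: 'a::comm_monoid_add)"
proof -
  have "(\<Sum>u<M. \<Sum>s<(S::nat). \<Sum>d<K. if u = 0 then (if d = c then g s else 0) else 0) = (\<Sum>u<M. if u = 0 then (\<Sum>s<S. g s) else 0)"
  proof (intro sum.cong refl)
    fix u show "(\<Sum>s<S. \<Sum>d<K. if u = 0 then (if d = c then g s else 0) else 0) = (if u = 0 then (\<Sum>s<S. g s) else 0)"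
      using assms by (cases "u = 0") simp_all
  qed
  also have "\<dots> = (\<Sum>s<S. g s)" using assms by simp
  finally show ?thesis .
qed

lemma right_R: assumes F: "dim_col F = M*S*K" and i: "i < dim_row F" and c: "c' < K"
  and U: "U \<in> carrier_mat S S" and pos: "M > 0" "S > 0"
  shows "(F * kron (kron (1\<^sub>m M) U) (1\<^sub>m K)) $$ (i,c') = (\<Sum>s<S. F$$(i, s*K+c') * U$$(s,0))"
proof -
  have cl: "c' < M*S*K" using c pos
    by (metis less_le_trans mult_le_mono1 nat_mult_1 Suc_leI One_nat_def mult.commute)
  note UU = carrier_matD[OF U]
  have "(F * kron (kron (1\<^sub>m M) U) (1\<^sub>m K)) $$ (i,c') =
    (\<Sum>q<M*S*K. F $$ (i,q) * kron (kron (1\<^sub>m M) U) (1\<^sub>m K) $$ (q,c'))"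
    using F i c UU pos cl by (simp del: index_mult_mat(1) add: mult_entry)
  also have "\<dots> = (\<Sum>u<M. \<Sum>s<S. \<Sum>d<K. F $$ (i,(u*S+s)*K+d) * kron (kron (1\<^sub>m M) U) (1\<^sub>m K) $$ ((u*S+s)*K+d,c'))"
    by (simp add: sum_split)
  also have "\<dots> = (\<Sum>u<M. \<Sum>s<S. \<Sum>d<K. if u = 0 then (if d = c' then F $$ (i,s*K+c') * U$$(s,0) else 0) else 0)"
  proof (intro sum.cong refl)
    fix u s d assume "u \<in> {..<M}" "s \<in> {..<S}" "d \<in> {..<K}"
    then have l: "u < M" "s < S" "d < K" by auto
    then have "(u*S+s)*K+d < M*S*K" "u*S+s < M*S" by (auto intro!: lt_comb)
    then show "F $$ (i,(u*S+s)*K+d) * kron (kron (1\<^sub>m M) U) (1\<^sub>m K) $$ ((u*S+s)*K+d,c') =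
      (if u = 0 then (if d = c' then F $$ (i,s*K+c') * U$$(s,0) else 0) else 0)"
      using l UU c pos cl by (simp add: decomp3_div)
  qed
  also have "\<dots> = (\<Sum>s<S. F$$(i, s*K+c') * U$$(s,0))"
    by (rule collapse[OF pos(1) c])
  finally show ?thesis .
qed

lemma left_L: assumes F: "dim_row F = M*S*K" and j: "j < dim_col F" and c: "c < K"
  and U: "U \<in> carrier_mat S S" and pos: "M > 0" "S > 0"
  shows "(kron (kron (1\<^sub>m M) (cadj U)) (1\<^sub>m K) * F) $$ (c,j) = (\<Sum>s<S. cnj (U$$(s,0)) * F$$(s*K+c, j))"
proof -
  have cl: "c < M*S*K" using c pos
    by (metis less_le_trans mult_le_mono1 nat_mult_1 Suc_leI One_nat_def mult.commute)
  note UU = carrier_matD[OF U]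
  have "(kron (kron (1\<^sub>m M) (cadj U)) (1\<^sub>m K) * F) $$ (c,j) =
    (\<Sum>q<M*S*K. kron (kron (1\<^sub>m M) (cadj U)) (1\<^sub>m K) $$ (c,q) * F $$ (q,j))"
    using F j c UU pos cl by (simp del: index_mult_mat(1) add: mult_entry)
  also have "\<dots> = (\<Sum>u<M. \<Sum>s<S. \<Sum>d<K. kron (kron (1\<^sub>m M) (cadj U)) (1\<^sub>m K) $$ (c,(u*S+s)*K+d) * F $$ ((u*S+s)*K+d,j))"
    by (simp add: sum_split)
  also have "\<dots> = (\<Sum>u<M. \<Sum>s<S. \<Sum>d<K. if u = 0 then (if d = c then cnj (U$$(s,0)) * F$$(s*K+c, j) else 0) else 0)"
  proof (intro sum.cong refl)
    fix u s d assume "u \<in> {..<M}" "s \<in> {..<S}" "d \<in> {..<K}"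
    then have l: "u < M" "s < S" "d < K" by auto
    then have "(u*S+s)*K+d < M*S*K" "u*S+s < M*S" by (auto intro!: lt_comb)
    then show "kron (kron (1\<^sub>m M) (cadj U)) (1\<^sub>m K) $$ (c,(u*S+s)*K+d) * F $$ ((u*S+s)*K+d,j) =
      (if u = 0 then (if d = c then cnj (U$$(s,0)) * F$$(s*K+c, j) else 0) else 0)"
      using l UU c pos cl by (auto simp add: decomp3_div)
  qed
  also have "\<dots> = (\<Sum>s<S. cnj (U$$(s,0)) * F$$(s*K+c, j))"
    by (rule collapse[OF pos(1) c])
  finally show ?thesis .
qed

lemma idx_re: "((a::nat)*N+i)*K+c = (0*R+a)*(N*K) + (i*K+c)"
  by (simp add: algebra_simps)

lemma E_entry: assumes "M > 0" "a < R" "b < R" "i < N" "j < N" "c < K" "c' < K"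
  shows "embed_mid M R (N*K) W $$ ((a*N+i)*K+c, (b*N+j)*K+c') = (if a = b then W $$ (i*K+c, j*K+c') else 0)"
  using em_entry[of 0 M 0 a R b "i*K+c" "N*K" "j*K+c'" W] assms
  by (simp add: idx_re[of a N i K c R] idx_re[of b N j K c' R] lt_comb)

lemma V_entry: assumes pos: "M > 0" "R > 0" "N > 0" "K > 0"
  and U: "U \<in> carrier_mat (R*N) (R*N)" and c: "c < K" "c' < K"
  shows "(kron (kron (1\<^sub>m M) (cadj U)) (1\<^sub>m K) * embed_mid M R (N*K) W * kron (kron (1\<^sub>m M) U) (1\<^sub>m K)) $$ (c,c')
   = (\<Sum>a<R. \<Sum>i<N. \<Sum>j<N. cnj (U$$(a*N+i,0)) * U$$(a*N+j,0) * W$$(i*K+c, j*K+c'))"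
proof -
  let ?L = "kron (kron (1\<^sub>m M) (cadj U)) (1\<^sub>m K)"
  let ?E = "embed_mid M R (N*K) W"
  have cl: "c < M*(R*N)*K"
    using c pos by (metis less_le_trans mult_le_mono1 nat_mult_1 Suc_leI One_nat_def mult.commute nat_0_less_mult_iff)
  have d1: "dim_col (?L * ?E) = M*(R*N)*K" "dim_row ?E = M*(R*N)*K" by (simp_all add: mult_ac)
  have "(?L * ?E * kron (kron (1\<^sub>m M) U) (1\<^sub>m K)) $$ (c,c') = (\<Sum>t<R*N. (?L * ?E) $$ (c, t*K+c') * U$$(t,0))"
    using pos U c cl d1 by (intro right_R) (auto simp: mult_ac)
  also have "\<dots> = (\<Sum>t<R*N. (\<Sum>s<R*N. cnj (U$$(s,0)) * ?E $$ (s*K+c, t*K+c')) * U$$(t,0))"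
  proof (intro sum.cong refl)
    fix t assume "t \<in> {..<R*N}"
    then have "t*K+c' < M*(R*N)*K" using c pos
      by (metis lessThan_iff lt_comb less_le_trans mult_le_mono1 nat_mult_1 Suc_leI One_nat_def mult.commute nat_0_less_mult_iff)
    then show "(?L * ?E) $$ (c, t*K+c') * U$$(t,0) = (\<Sum>s<R*N. cnj (U$$(s,0)) * ?E $$ (s*K+c, t*K+c')) * U$$(t,0)"
      using pos U c d1 left_L[where F="?E" and M=M and S="R*N" and K=K and j="t*K+c'" and c=c and U=U] by auto
  qed
  also have "\<dots> = (\<Sum>b<R. \<Sum>j<N. (\<Sum>a<R. \<Sum>i<N. cnj (U$$(a*N+i,0)) * (if a = b then W $$ (i*K+c, j*K+c') else 0)) * U$$(b*N+j,0))"
    using pos c by (simp add: sum_split E_entry)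
  also have "\<dots> = (\<Sum>b<R. \<Sum>j<N. (\<Sum>i<N. cnj (U$$(b*N+i,0)) * W $$ (i*K+c, j*K+c')) * U$$(b*N+j,0))"
  proof (intro sum.cong refl)
    fix b j assume "b \<in> {..<R}"
    then have "(\<Sum>a<R. \<Sum>i<N. cnj (U$$(a*N+i,0)) * (if a = b then W $$ (i*K+c, j*K+c') else 0)) =
       (\<Sum>a<R. if a = b then (\<Sum>i<N. cnj (U$$(a*N+i,0)) * W $$ (i*K+c, j*K+c')) else 0)"
      by (intro sum.cong refl) auto
    also have "\<dots> = (\<Sum>i<N. cnj (U$$(b*N+i,0)) * W $$ (i*K+c, j*K+c'))" using \<open>b \<in> _\<close> by (simp add: sum.delta')
    finally show "(\<Sum>a<R. \<Sum>i<N. cnj (U$$(a*N+i,0)) * (if a = b then W $$ (i*K+c, j*K+c') else 0)) * U$$(b*N+j,0) =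
       (\<Sum>i<N. cnj (U$$(b*N+i,0)) * W $$ (i*K+c, j*K+c')) * U$$(b*N+j,0)" by simp
  qed
  also have "\<dots> = (\<Sum>a<R. \<Sum>i<N. \<Sum>j<N. cnj (U$$(a*N+i,0)) * U$$(a*N+j,0) * W$$(i*K+c, j*K+c'))"
  proof (rule sum.cong[OF refl])
    fix a
    have "(\<Sum>j<N. (\<Sum>i<N. cnj (U$$(a*N+i,0)) * W $$ (i*K+c, j*K+c')) * U$$(a*N+j,0)) =
      (\<Sum>j<N. \<Sum>i<N. cnj (U$$(a*N+i,0)) * W $$ (i*K+c, j*K+c') * U$$(a*N+j,0))"
      by (simp add: sum_distrib_right)
    also have "\<dots> = (\<Sum>i<N. \<Sum>j<N. cnj (U$$(a*N+i,0)) * W $$ (i*K+c, j*K+c') * U$$(a*N+j,0))"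
      by (rule sum.swap)
    finally show "(\<Sum>j<N. (\<Sum>i<N. cnj (U$$(a*N+i,0)) * W $$ (i*K+c, j*K+c')) * U$$(a*N+j,0)) =
      (\<Sum>i<N. \<Sum>j<N. cnj (U$$(a*N+i,0)) * U$$(a*N+j,0) * W$$(i*K+c, j*K+c'))"
      by (simp add: mult_ac)
  qed
  finally show ?thesis .
qed

definition emat :: "nat \<Rightarrow> nat \<Rightarrow> nat \<Rightarrow> complex mat" where
  "emat d i j = mat d d (\<lambda>(a,b). if a = i \<and> b = j then 1 else 0)"

definition part :: "nat \<Rightarrow> complex mat \<Rightarrow> (nat \<times> nat) set \<Rightarrow> complex mat" where
  "part d A S = mat d d (\<lambda>(i,j). if (i,j) \<in> S then A $$ (i,j) else 0)"

lemma lin_part: assumes N: "lin_map dX dY N" and A: "A \<in> carrier_mat dX dX" and c: "c < dY" "c' < dY"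
  and S: "finite S"
  shows "N (part dX A S) $$ (c,c') = (\<Sum>x\<in>S. A $$ x * N (emat dX (fst x) (snd x)) $$ (c,c'))"
  using S
proof (induction S rule: finite_induct)
  case empty
  have "part dX A {} = 0 \<cdot>\<^sub>m A" using A by (intro eq_matI) (auto simp: part_def)
  then have "N (part dX A {}) = 0 \<cdot>\<^sub>m N A" using N A unfolding lin_map_def by simp
  moreover have "N A \<in> carrier_mat dY dY" using N A unfolding lin_map_def by simp
  ultimately show ?case using c by simp
next
  case (insert x S)
  obtain i j where x: "x = (i,j)" by (cases x)
  have pc: "part dX A S \<in> carrier_mat dX dX" "emat dX i j \<in> carrier_mat dX dX" "A $$ (i,j) \<cdot>\<^sub>m emat dX i j \<in> carrier_mat dX dX"
    by (auto simp: part_def emat_def)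
  have "part dX A (insert x S) = part dX A S + A $$ (i,j) \<cdot>\<^sub>m emat dX i j"
    using insert x by (intro eq_matI) (auto simp: part_def emat_def)
  then have "N (part dX A (insert x S)) = N (part dX A S) + A $$ (i,j) \<cdot>\<^sub>m N (emat dX i j)"
    using N pc unfolding lin_map_def by simp
  moreover have "N (part dX A S) \<in> carrier_mat dY dY" "N (emat dX i j) \<in> carrier_mat dY dY"
    using N pc unfolding lin_map_def by auto
  ultimately show ?case using insert c x by simp
qed

lemma lin_expand: assumes N: "lin_map dX dY N" and A: "A \<in> carrier_mat dX dX" and c: "c < dY" "c' < dY"
  shows "N A $$ (c,c') = (\<Sum>i<dX. \<Sum>j<dX. A $$ (i,j) * N (emat dX i j) $$ (c,c'))"
proof -
  have "part dX A ({..<dX} \<times> {..<dX}) = A" using A by (intro eq_matI) (auto simp: part_def)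
  then have "N A $$ (c,c') = (\<Sum>x\<in>{..<dX} \<times> {..<dX}. A $$ x * N (emat dX (fst x) (snd x)) $$ (c,c'))"
    using lin_part[OF N A c, of "{..<dX} \<times> {..<dX}"] by simp
  also have "\<dots> = (\<Sum>i<dX. \<Sum>j<dX. A $$ (i,j) * N (emat dX i j) $$ (c,c'))"
    by (simp add: sum.cartesian_product split_beta)
  finally show ?thesis .
qed

lemma choiT_entry: assumes "i < dX" "j < dX" "c < dY" "c' < dY"
  shows "ptranspose1 dX dY (choi dX dY N) $$ (i*dY+c, j*dY+c') = N (emat dX j i) $$ (c,c')"
proof -
  have l: "i*dY+c < dX*dY" "j*dY+c' < dX*dY" "j*dY+c < dX*dY" "i*dY+c' < dX*dY" using assms by (auto intro!: lt_comb)
  have "block dX (outer (phi_plus dX) (phi_plus dX)) j i = emat dX j i"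
  proof (rule eq_matI)
    fix a b assume ab: "a < dim_row (emat dX j i)" "b < dim_col (emat dX j i)"
    then have "j*dX+a < dX*dX" "i*dX+b < dX*dX" using assms by (auto simp: emat_def intro!: lt_comb)
    then show "block dX (outer (phi_plus dX) (phi_plus dX)) j i $$ (a,b) = emat dX j i $$ (a,b)"
      using ab by (auto simp: block_def outer_def phi_plus_def emat_def)
  qed (auto simp: block_def emat_def)
  then show ?thesis using l assms
    by (simp add: ptranspose1_def choi_def id_tensor_map_def)
qed

lemma cs_real: fixes f g :: "'b \<Rightarrow> real" assumes "finite A"
  shows "(\<Sum>i\<in>A. \<bar>f i\<bar> * \<bar>g i\<bar>)^2 \<le> (\<Sum>i\<in>A. (f i)^2) * (\<Sum>i\<in>A. (g i)^2)"
proof -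
  have 0: "0 \<le> (\<Sum>i\<in>A. \<bar>f i\<bar> * \<bar>g i\<bar>)" by (simp add: sum_nonneg)
  have "(\<Sum>i\<in>A. \<bar>f i\<bar> * \<bar>g i\<bar>)^2 \<le> (L2_set f A * L2_set g A)^2"
    using L2_set_mult_ineq[of f g A] 0 by (intro power_mono) auto
  also have "\<dots> = (\<Sum>i\<in>A. (f i)^2) * (\<Sum>i\<in>A. (g i)^2)"
    unfolding L2_set_def power_mult_distrib by (simp add: sum_nonneg)
  finally show ?thesis .
qed

lemma cs_complex: assumes "finite A"
  shows "(cmod (\<Sum>i\<in>A. cnj (p i) * q i))^2 \<le> (\<Sum>i\<in>A. (cmod (p i))^2) * (\<Sum>i\<in>A. (cmod (q i))^2)"
proof -
  have "cmod (\<Sum>i\<in>A. cnj (p i) * q i) \<le> (\<Sum>i\<in>A. \<bar>cmod (p i)\<bar> * \<bar>cmod (q i)\<bar>)"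
    by (rule order_trans[OF norm_sum]) (simp add: norm_mult)
  then have "(cmod (\<Sum>i\<in>A. cnj (p i) * q i))^2 \<le> (\<Sum>i\<in>A. \<bar>cmod (p i)\<bar> * \<bar>cmod (q i)\<bar>)^2"
    by (intro power_mono) auto
  also have "\<dots> \<le> (\<Sum>i\<in>A. (cmod (p i))^2) * (\<Sum>i\<in>A. (cmod (q i))^2)"
    using cs_real[OF assms, of "\<lambda>i. cmod (p i)" "\<lambda>i. cmod (q i)"] by simp
  finally show ?thesis .
qed

lemma vnorm_sq: "(vnorm v)^2 = (\<Sum>i<dim_vec v. (cmod (v $ i))^2)"
proof -
  have "0 \<le> (\<Sum>i<dim_vec v. (cmod (v $ i))^2)" by (intro sum_nonneg) simp
  then show ?thesis unfolding vnorm_def by simp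
qed

lemma vnorm_nonneg: "0 \<le> vnorm v" unfolding vnorm_def by (simp add: sum_nonneg)

lemma vnorm_smult: "vnorm (k \<cdot>\<^sub>v v) = cmod k * vnorm v"
proof -
  have "(vnorm (k \<cdot>\<^sub>v v))^2 = (cmod k * vnorm v)^2"
    unfolding vnorm_sq power_mult_distrib by (simp add: norm_mult power_mult_distrib sum_distrib_left)
  then show ?thesis using vnorm_nonneg by (metis norm_ge_zero power2_eq_iff_nonneg zero_le_mult_iff)
qed

lemma entry_le_vnorm: "i < dim_vec v \<Longrightarrow> cmod (v $ i) \<le> vnorm v"
  unfolding vnorm_def using member_le_L2_set[of "{..<dim_vec v}" i "\<lambda>i. cmod (v$i)"]
  by (simp add: L2_set_def)

lemma vnorm_le_sum: "vnorm v \<le> (\<Sum>i<dim_vec v. cmod (v $ i))"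
  unfolding vnorm_def using L2_set_le_sum[of "{..<dim_vec v}" "\<lambda>i. cmod (v$i)"]
  by (simp add: L2_set_def)

lemma op_bdd: "bdd_above {vnorm (D *\<^sub>v v) | v. v \<in> carrier_vec (dim_col D) \<and> vnorm v \<le> 1}"
proof (rule bdd_aboveI)
  fix x assume "x \<in> {vnorm (D *\<^sub>v v) | v. v \<in> carrier_vec (dim_col D) \<and> vnorm v \<le> 1}"
  then obtain v where v: "v \<in> carrier_vec (dim_col D)" "vnorm v \<le> 1" and x: "x = vnorm (D *\<^sub>v v)" by auto
  have "vnorm (D *\<^sub>v v) \<le> (\<Sum>i<dim_row D. cmod ((D *\<^sub>v v) $ i))" using vnorm_le_sum[of "D *\<^sub>v v"] by simp
  also have "\<dots> \<le> (\<Sum>i<dim_row D. \<Sum>j<dim_col D. cmod (D $$ (i,j)))"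
  proof (intro sum_mono)
    fix i assume i: "i \<in> {..<dim_row D}"
    have "cmod ((D *\<^sub>v v) $ i) = cmod (\<Sum>j<dim_col D. D $$ (i,j) * v $ j)"
      using i v by (simp add: scalar_prod_def lessThan_atLeast0)
    also have "\<dots> \<le> (\<Sum>j<dim_col D. cmod (D $$ (i,j)) * cmod (v $ j))"
      by (rule order_trans[OF norm_sum]) (simp add: norm_mult)
    also have "\<dots> \<le> (\<Sum>j<dim_col D. cmod (D $$ (i,j)))"
    proof (intro sum_mono)
      fix j assume "j \<in> {..<dim_col D}"
      then have "cmod (v $ j) \<le> 1" using v entry_le_vnorm[of j v] by auto
      then show "cmod (D $$ (i,j)) * cmod (v $ j) \<le> cmod (D $$ (i,j))"
        by (simp add: mult_left_le)
    qed
    finally show "cmod ((D *\<^sub>v v) $ i) \<le> (\<Sum>j<dim_col D. cmod (D $$ (i,j)))" .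
  qed
  finally show "x \<le> (\<Sum>i<dim_row D. \<Sum>j<dim_col D. cmod (D $$ (i,j)))" using x by simp
qed

lemma op_apply: assumes Dn: "op_norm D \<le> \<epsilon>" and w: "w \<in> carrier_vec (dim_col D)"
  shows "vnorm (D *\<^sub>v w) \<le> \<epsilon> * vnorm w"
proof (cases "vnorm w = 0")
  case True
  then have "\<forall>i<dim_vec w. cmod (w $ i) = 0" using entry_le_vnorm vnorm_nonneg
    by (metis norm_ge_zero order_antisym)
  then have "w = 0\<^sub>v (dim_col D)" using w by (intro eq_vecI) auto
  then have "D *\<^sub>v w = 0\<^sub>v (dim_row D)" by (intro eq_vecI) (auto simp: scalar_prod_def)
  then show ?thesis using True by (simp add: vnorm_def)
next
  case False
  then have pos: "vnorm w > 0" using vnorm_nonneg by (metis less_eq_real_def)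
  define w' where "w' = complex_of_real (1 / vnorm w) \<cdot>\<^sub>v w"
  have w': "w' \<in> carrier_vec (dim_col D)" "vnorm w' = 1"
    using w pos by (auto simp: w'_def vnorm_smult norm_divide)
  have "D *\<^sub>v w' = complex_of_real (1 / vnorm w) \<cdot>\<^sub>v (D *\<^sub>v w)"
    unfolding w'_def using w by (intro mult_mat_vec[of D "dim_row D" "dim_col D"]) auto
  then have e: "vnorm (D *\<^sub>v w') = vnorm (D *\<^sub>v w) / vnorm w"
    using pos by (simp add: vnorm_smult norm_divide)
  have "vnorm (D *\<^sub>v w') \<le> op_norm D"
    unfolding op_norm_def using w' by (intro cSup_upper[OF _ op_bdd]) auto
  then have "vnorm (D *\<^sub>v w) / vnorm w \<le> \<epsilon>" using Dn e by simp
  then show ?thesis using pos by (simp add: divide_le_eq mult.commute)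
qed

lemma swap3: "(\<Sum>c<K. \<Sum>a<R. \<Sum>i<N. \<Sum>j<N. F c a i j) = (\<Sum>a<R. \<Sum>i<N. \<Sum>j<N. \<Sum>c<(K::nat). F c a i j :: 'a::comm_monoid_add)"
proof -
  have "(\<Sum>c<K. \<Sum>a<R. \<Sum>i<N. \<Sum>j<N. F c a i j) = (\<Sum>a<R. \<Sum>c<K. \<Sum>i<N. \<Sum>j<N. F c a i j)"
    by (rule sum.swap)
  also have "\<dots> = (\<Sum>a<R. \<Sum>i<N. \<Sum>c<K. \<Sum>j<N. F c a i j)"
    by (rule sum.cong[OF refl], rule sum.swap)
  also have "\<dots> = (\<Sum>a<R. \<Sum>i<N. \<Sum>j<N. \<Sum>c<K. F c a i j)"
    by (rule sum.cong[OF refl], rule sum.cong[OF refl], rule sum.swap)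
  finally show ?thesis .
qed

lemma norm_main:
  fixes \<psi> :: "nat \<Rightarrow> complex" and N K R :: nat
  assumes D: "D \<in> carrier_mat (N*K) (N*K)" and Dn: "op_norm D \<le> \<epsilon>" and eps: "0 \<le> \<epsilon>"
    and psi: "(\<Sum>s<R*N. (cmod (\<psi> s))^2) = 1" and pos: "N > 0" "K > 0"
  shows "op_norm (mat K K (\<lambda>(c,c'). \<Sum>a<R. \<Sum>i<N. \<Sum>j<N. cnj (\<psi>(a*N+i)) * \<psi>(a*N+j) * D$$(i*K+c, j*K+c'))) \<le> \<epsilon>"
    (is "op_norm ?X \<le> _")
  unfolding op_norm_def
proof (rule cSup_least)
  have "vnorm (0\<^sub>v K) = 0" by (simp add: vnorm_def)
  then show "{vnorm (?X *\<^sub>v v) |v. v \<in> carrier_vec (dim_col ?X) \<and> vnorm v \<le> 1} \<noteq> {}"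
    by (auto intro!: exI[of _ "0\<^sub>v K"])
next
  fix x assume "x \<in> {vnorm (?X *\<^sub>v v) |v. v \<in> carrier_vec (dim_col ?X) \<and> vnorm v \<le> 1}"
  then obtain v where v: "v \<in> carrier_vec K" "vnorm v \<le> 1" and x: "x = vnorm (?X *\<^sub>v v)" by auto
  define w where "w a = vec (N*K) (\<lambda>y. \<psi>(a*N + y div K) * v$(y mod K))" for a
  define y where "y a = D *\<^sub>v w a" for a
  have ydim: "dim_vec (y a) = N*K" for a using D by (simp add: y_def)
  have wc: "w a \<in> carrier_vec (dim_col D)" for a using D by (simp add: w_def)
  have f1: "(y a)$(i*K+c) = (\<Sum>j<N. \<Sum>c'<K. D$$(i*K+c, j*K+c') * (\<psi>(a*N+j) * v$c'))"
    if "i < N" "c < K" for a i c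
  proof -
    have "i*K+c < N*K" using that by (rule lt_comb)
    then have "(y a)$(i*K+c) = (\<Sum>l<N*K. D$$(i*K+c,l) * w a $ l)"
      using D by (simp add: y_def w_def scalar_prod_def lessThan_atLeast0)
    also have "\<dots> = (\<Sum>j<N. \<Sum>c'<K. D$$(i*K+c, j*K+c') * w a $ (j*K+c'))"
      by (rule sum_split)
    also have "\<dots> = (\<Sum>j<N. \<Sum>c'<K. D$$(i*K+c, j*K+c') * (\<psi>(a*N+j) * v$c'))"
      by (intro sum.cong refl) (auto simp: w_def lt_comb)
    finally show ?thesis .
  qed
  have f2: "(?X *\<^sub>v v)$c = (\<Sum>a<R. \<Sum>i<N. cnj (\<psi>(a*N+i)) * (y a)$(i*K+c))" if c: "c < K" for c
  proof -
    have "(?X *\<^sub>v v)$c = (\<Sum>c'<K. ?X $$ (c,c') * v$c')"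
      using c v by (simp add: scalar_prod_def lessThan_atLeast0)
    also have "\<dots> = (\<Sum>c'<K. \<Sum>a<R. \<Sum>i<N. \<Sum>j<N. cnj (\<psi>(a*N+i)) * \<psi>(a*N+j) * D$$(i*K+c, j*K+c') * v$c')"
      using c by (simp add: sum_distrib_right)
    also have "\<dots> = (\<Sum>a<R. \<Sum>i<N. \<Sum>j<N. \<Sum>c'<K. cnj (\<psi>(a*N+i)) * \<psi>(a*N+j) * D$$(i*K+c, j*K+c') * v$c')"
      by (rule swap3)
    also have "\<dots> = (\<Sum>a<R. \<Sum>i<N. cnj (\<psi>(a*N+i)) * (y a)$(i*K+c))"
      using c by (simp add: f1 sum_distrib_left mult_ac)
    finally show ?thesis .
  qed
  define g where "g c s = (y (s div N))$((s mod N)*K + c)" for c s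
  have f3: "(?X *\<^sub>v v)$c = (\<Sum>s<R*N. cnj (\<psi> s) * g c s)" if c: "c < K" for c
    unfolding f2[OF c] sum_split g_def by (intro sum.cong refl) auto
  have f4: "(cmod ((?X *\<^sub>v v)$c))^2 \<le> (\<Sum>s<R*N. (cmod (g c s))^2)" if c: "c < K" for c
    using cs_complex[of "{..<R*N}" \<psi> "g c"] psi by (simp add: f3[OF c])
  have "(vnorm (?X *\<^sub>v v))^2 = (\<Sum>c<K. (cmod ((?X *\<^sub>v v)$c))^2)" by (simp add: vnorm_sq)
  also have "\<dots> \<le> (\<Sum>c<K. \<Sum>s<R*N. (cmod (g c s))^2)" by (intro sum_mono f4) auto
  also have "\<dots> = (\<Sum>s<R*N. \<Sum>c<K. (cmod (g c s))^2)" by (rule sum.swap)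
  also have "\<dots> = (\<Sum>a<R. \<Sum>i<N. \<Sum>c<K. (cmod ((y a)$(i*K+c)))^2)"
    using pos by (simp add: sum_split g_def)
  also have "\<dots> = (\<Sum>a<R. (vnorm (y a))^2)"
    using ydim by (simp only: vnorm_sq ydim sum_split)
  also have "\<dots> \<le> (\<Sum>a<R. \<epsilon>^2 * (vnorm (w a))^2)"
  proof (intro sum_mono)
    fix a
    have "vnorm (y a) \<le> \<epsilon> * vnorm (w a)" unfolding y_def by (rule op_apply[OF Dn wc])
    then have "(vnorm (y a))^2 \<le> (\<epsilon> * vnorm (w a))^2" using vnorm_nonneg by (intro power_mono) auto
    then show "(vnorm (y a))^2 \<le> \<epsilon>^2 * (vnorm (w a))^2" by (simp add: power_mult_distrib)
  qed
  also have "\<dots> = \<epsilon>^2 * (\<Sum>a<R. \<Sum>i<N. \<Sum>c<K. (cmod (\<psi>(a*N+i)))^2 * (cmod (v$c))^2)"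
    by (simp add: sum_distrib_left vnorm_sq w_def sum_split norm_mult power_mult_distrib)
  also have "\<dots> = \<epsilon>^2 * ((\<Sum>s<R*N. (cmod (\<psi> s))^2) * (\<Sum>c<K. (cmod (v$c))^2))"
  proof -
    have "(\<Sum>a<R. \<Sum>i<N. \<Sum>c<K. (cmod (\<psi>(a*N+i)))^2 * (cmod (v$c))^2) =
       (\<Sum>a<R. \<Sum>i<N. (cmod (\<psi>(a*N+i)))^2 * (\<Sum>c<K. (cmod (v$c))^2))"
      by (simp only: sum_distrib_left)
    also have "\<dots> = (\<Sum>s<R*N. (cmod (\<psi> s))^2) * (\<Sum>c<K. (cmod (v$c))^2)"
      unfolding sum_distrib_right by (rule sum_split[of "\<lambda>s. (cmod (\<psi> s))^2 * (\<Sum>c<K. (cmod (v$c))^2)" R N, symmetric])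
    finally show ?thesis by (simp only:)
  qed
  also have "\<dots> = \<epsilon>^2 * (vnorm v)^2" using v by (simp only: psi vnorm_sq mult_1_left carrier_vecD)
  also have "\<dots> \<le> \<epsilon>^2 * 1"
    using v vnorm_nonneg[of v] by (intro mult_left_mono) (auto simp: power_le_one)
  finally have "(vnorm (?X *\<^sub>v v))^2 \<le> \<epsilon>^2" by (simp only: mult_1_right)
  then show "x \<le> \<epsilon>" unfolding x using eps by (rule power2_le_imp_le)
qed

lemma combine:
  fixes p :: "nat \<Rightarrow> complex" and N R :: nat
  shows "(\<Sum>i<N. \<Sum>j<N. (\<Sum>a<R. p(a*N+i) * cnj(p(a*N+j))) * F i j) - \<alpha> * (\<Sum>a<R. \<Sum>i<N. \<Sum>j<N. cnj(p(a*N+i)) * p(a*N+j) * G i j)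
     = (\<Sum>a<R. \<Sum>i<N. \<Sum>j<N. cnj(p(a*N+i)) * p(a*N+j) * (F j i - \<alpha> * G i j))"
proof -
  have 1: "(\<Sum>i<N. \<Sum>j<N. (\<Sum>a<R. p(a*N+i) * cnj(p(a*N+j))) * F i j) = (\<Sum>a<R. \<Sum>i<N. \<Sum>j<N. cnj(p(a*N+i)) * p(a*N+j) * F j i)"
  proof -
    have "(\<Sum>i<N. \<Sum>j<N. (\<Sum>a<R. p(a*N+i) * cnj(p(a*N+j))) * F i j) = (\<Sum>i<N. \<Sum>j<N. \<Sum>a<R. p(a*N+i) * cnj(p(a*N+j)) * F i j)"
      by (simp only: sum_distrib_right)
    also have "\<dots> = (\<Sum>i<N. \<Sum>a<R. \<Sum>j<N. p(a*N+i) * cnj(p(a*N+j)) * F i j)"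
      by (rule sum.cong[OF refl], rule sum.swap)
    also have "\<dots> = (\<Sum>a<R. \<Sum>i<N. \<Sum>j<N. p(a*N+i) * cnj(p(a*N+j)) * F i j)"
      by (rule sum.swap)
    also have "\<dots> = (\<Sum>a<R. \<Sum>j<N. \<Sum>i<N. p(a*N+i) * cnj(p(a*N+j)) * F i j)"
      by (rule sum.cong[OF refl], rule sum.swap)
    also have "\<dots> = (\<Sum>a<R. \<Sum>i<N. \<Sum>j<N. cnj(p(a*N+i)) * p(a*N+j) * F j i)"
      by (simp only: mult_ac)
    finally show ?thesis .
  qed
  have 2: "\<alpha> * (\<Sum>a<R. \<Sum>i<N. \<Sum>j<N. cnj(p(a*N+i)) * p(a*N+j) * G i j) = (\<Sum>a<R. \<Sum>i<N. \<Sum>j<N. cnj(p(a*N+i)) * p(a*N+j) * (\<alpha> * G i j))"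
    by (simp only: sum_distrib_left mult_ac)
  show ?thesis unfolding 1 2 by (simp only: sum_subtractf[symmetric] right_diff_distrib)
qed

lemma unitary_cadj: "unitary d U \<Longrightarrow> unitary d (cadj U)"
  unfolding unitary_def by auto

lemma unitary_one: "unitary d (1\<^sub>m d)"
  unfolding unitary_def by auto

lemma psi_norm: assumes U: "unitary d U" and d: "0 < d"
  shows "(\<Sum>s<d. (cmod (U $$ (s,0)))^2) = 1"
proof -
  have Uc: "U \<in> carrier_mat d d" using U unfolding unitary_def by auto
  have "(cadj U * U) $$ (0,0) = 1" using U d unfolding unitary_def by simp
  moreover have "(cadj U * U) $$ (0,0) = (\<Sum>s<d. cnj (U $$ (s,0)) * U $$ (s,0))"
    using Uc d by (simp del: index_mult_mat(1) add: mult_entry)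
  moreover have "\<dots> = complex_of_real (\<Sum>s<d. (cmod (U $$ (s,0)))^2)"
    unfolding of_real_sum by (simp only: complex_norm_square mult.commute)
  ultimately show ?thesis by (metis of_real_eq_1_iff)
qed

theorem theorem1:
  fixes n k r m :: nat and \<alpha> \<epsilon> :: real
    and N :: "complex mat \<Rightarrow> complex mat"
    and \<rho> U\<rho> UNc :: "complex mat"
  assumes N_lin: "lin_map (2^n) (2^k) N"
    and rho: "density_matrix (2^n) \<rho>"
    and Urho: "unitary (2^(r+n)) U\<rho>"
    and purif: "ptrace1 (2^r) (2^n)
                  (outer (U\<rho> *\<^sub>v unit_vec (2^(r+n)) 0) (U\<rho> *\<^sub>v unit_vec (2^(r+n)) 0)) = \<rho>"
    and UNc: "block_encoding \<alpha> m (n+k) \<epsilon> (ptranspose1 (2^n) (2^k) (choi (2^n) (2^k) N)) UNc"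
  shows "block_encoding \<alpha> (m+r+n) k \<epsilon> (N \<rho>)
           (kron (kron (1\<^sub>m (2^m)) (cadj U\<rho>)) (1\<^sub>m (2^k))
            * embed_mid (2^m) (2^r) (2^(n+k)) UNc
            * kron (kron (1\<^sub>m (2^m)) U\<rho>) (1\<^sub>m (2^k)))"
proof -
  let ?A = "ptranspose1 (2^n) (2^k) (choi (2^n) (2^k) N)"
  let ?Bm = "kron (bra0 m) (1\<^sub>m (2^(n+k))) * UNc * kron (ket0 m) (1\<^sub>m (2^(n+k)))"
  define D where "D = ?A - complex_of_real \<alpha> \<cdot>\<^sub>m ?Bm"
  let ?R = "kron (kron (1\<^sub>m (2^m)) U\<rho>) (1\<^sub>m (2^k))"
  let ?L = "kron (kron (1\<^sub>m (2^m)) (cadj U\<rho>)) (1\<^sub>m (2^k))"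
  let ?E = "embed_mid (2^m) (2^r) (2^(n+k)) UNc"
  let ?V = "?L * ?E * ?R"
  define \<psi> where "\<psi> s = U\<rho> $$ (s,0)" for s
  have a0: "0 \<le> \<alpha>" and e0: "0 \<le> \<epsilon>" and Uu: "unitary (2^(m+(n+k))) UNc"
    and Dn: "op_norm D \<le> \<epsilon>"
    using UNc unfolding block_encoding_def D_def by auto
  have p2: "(2::nat)^(n+k) = 2^n*2^k" "(2::nat)^(r+n) = 2^r*2^n" "(2::nat)^(m+(n+k)) = 2^m*2^(n+k)"
    "(2::nat)^(m+r+n+k) = 2^(m+r+n) * 2^k"
    by (simp_all add: power_add)
  have Uc: "U\<rho> \<in> carrier_mat (2^r*2^n) (2^r*2^n)" using Urho p2 unfolding unitary_def by auto
  have UNcc: "UNc \<in> carrier_mat (2^m*2^(n+k)) (2^m*2^(n+k))" using Uu p2 unfolding unitary_def by auto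
  have rhoc: "\<rho> \<in> carrier_mat (2^n) (2^n)" using rho unfolding density_matrix_def by auto
  have uR: "unitary (2^(m+r+n+k)) ?R"
  proof -
    have "unitary (2^m * 2^(r+n) * 2^k) ?R"
      by (intro unitary_kron unitary_one Urho)
    moreover have "(2::nat)^m * 2^(r+n) * 2^k = 2^(m+r+n+k)" by (simp add: power_add)
    ultimately show ?thesis by simp
  qed
  have uE: "unitary (2^(m+r+n+k)) ?E"
  proof -
    have "unitary (2^m * 2^(n+k)) UNc" using Uu p2 by simp
    then have "unitary (2^m * 2^r * 2^(n+k)) ?E" by (rule unitary_em)
    moreover have "(2::nat)^m * 2^r * 2^(n+k) = 2^(m+r+n+k)" by (simp add: power_add)
    ultimately show ?thesis by simp
  qed
  have LR: "?L = cadj ?R" by (simp add: cadj_kron)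
  have uV: "unitary (2^(m+r+n+k)) ?V"
    unfolding LR by (intro unitary_mult unitary_cadj uR uE)
  have Vc: "?V \<in> carrier_mat (2^(m+r+n) * 2^k) (2^(m+r+n) * 2^k)"
    using uV p2 unfolding unitary_def by auto
  have pos: "(0::nat) < 2^m" "(0::nat) < 2^r" "(0::nat) < 2^n" "(0::nat) < 2^k" by simp_all
  have Vent: "(kron (bra0 (m+r+n)) (1\<^sub>m (2^k)) * ?V * kron (ket0 (m+r+n)) (1\<^sub>m (2^k))) $$ (c,c') =
     (\<Sum>a<2^r. \<Sum>i<2^n. \<Sum>j<2^n. cnj (\<psi>(a*2^n+i)) * \<psi>(a*2^n+j) * UNc$$(i*2^k+c, j*2^k+c'))"
    if c: "c < 2^k" "c' < 2^k" for c c'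
  proof -
    have "(kron (bra0 (m+r+n)) (1\<^sub>m (2^k)) * ?V * kron (ket0 (m+r+n)) (1\<^sub>m (2^k))) $$ (c,c') = ?V $$ (c,c')"
      by (rule block_extract[OF Vc c])
    also have "\<dots> = (\<Sum>a<2^r. \<Sum>i<2^n. \<Sum>j<2^n. cnj (U\<rho>$$(a*2^n+i,0)) * U\<rho>$$(a*2^n+j,0) * UNc$$(i*2^k+c, j*2^k+c'))"
      unfolding p2(1) by (rule V_entry[OF pos Uc c])
    finally show ?thesis unfolding \<psi>_def .
  qed
  have rho_ent: "\<rho> $$ (i,j) = (\<Sum>a<2^r. \<psi>(a*2^n+i) * cnj (\<psi>(a*2^n+j)))"
    if ij: "i < 2^n" "j < 2^n" for i j
  proof -
    have ev: "(U\<rho> *\<^sub>v unit_vec (2^(r+n)) 0) $ s = \<psi> s" if "s < 2^(r+n)" for s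
    proof -
      have UU: "U\<rho> \<in> carrier_mat (2^(r+n)) (2^(r+n))" using Urho unfolding unitary_def by auto
      have "(U\<rho> *\<^sub>v unit_vec (2^(r+n)) 0) $ s = row U\<rho> s \<bullet> unit_vec (2^(r+n)) 0"
        using that UU by auto
      also have "\<dots> = row U\<rho> s $ 0" using UU by (intro scalar_prod_right_unit) auto
      also have "\<dots> = \<psi> s" using UU that unfolding \<psi>_def by auto
      finally show ?thesis .
    qed
    have "\<rho> $$ (i,j) = (\<Sum>a<2^r. (U\<rho> *\<^sub>v unit_vec (2^(r+n)) 0) $ (a*2^n+i) * cnj ((U\<rho> *\<^sub>v unit_vec (2^(r+n)) 0) $ (a*2^n+j)))"
    proof -
      have "\<rho> $$ (i,j) = (\<Sum>a<2^r. outer (U\<rho> *\<^sub>v unit_vec (2^(r+n)) 0) (U\<rho> *\<^sub>v unit_vec (2^(r+n)) 0) $$ (a*2^n+i, a*2^n+j))"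
        unfolding purif[symmetric] using ij by (simp add: ptrace1_def)
      also have "\<dots> = (\<Sum>a<2^r. (U\<rho> *\<^sub>v unit_vec (2^(r+n)) 0) $ (a*2^n+i) * cnj ((U\<rho> *\<^sub>v unit_vec (2^(r+n)) 0) $ (a*2^n+j)))"
      proof (intro sum.cong refl)
        fix a assume "a \<in> {..<(2::nat)^r}"
        then have "a*2^n+i < 2^(r+n)" "a*2^n+j < 2^(r+n)" using ij p2 by (auto intro!: lt_comb)
        then show "outer (U\<rho> *\<^sub>v unit_vec (2^(r+n)) 0) (U\<rho> *\<^sub>v unit_vec (2^(r+n)) 0) $$ (a*2^n+i, a*2^n+j) =
          (U\<rho> *\<^sub>v unit_vec (2^(r+n)) 0) $ (a*2^n+i) * cnj ((U\<rho> *\<^sub>v unit_vec (2^(r+n)) 0) $ (a*2^n+j))"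
          using Urho unfolding unitary_def by (auto simp: outer_def)
      qed
      finally show ?thesis .
    qed
    also have "\<dots> = (\<Sum>a<2^r. \<psi>(a*2^n+i) * cnj (\<psi>(a*2^n+j)))"
    proof (intro sum.cong refl)
      fix a assume "a \<in> {..<(2::nat)^r}"
      then have "a*2^n+i < 2^(r+n)" "a*2^n+j < 2^(r+n)" using ij p2 by (auto intro!: lt_comb)
      then show "(U\<rho> *\<^sub>v unit_vec (2^(r+n)) 0) $ (a*2^n+i) * cnj ((U\<rho> *\<^sub>v unit_vec (2^(r+n)) 0) $ (a*2^n+j)) =
          \<psi>(a*2^n+i) * cnj (\<psi>(a*2^n+j))" by (simp add: ev)
    qed
    finally show ?thesis .
  qed
  have Dc: "D \<in> carrier_mat (2^n*2^k) (2^n*2^k)"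
    unfolding D_def using p2 by (auto simp: ptranspose1_def)
  have Dent: "D $$ (i*2^k+c, j*2^k+c') = N (emat (2^n) j i) $$ (c,c') - complex_of_real \<alpha> * UNc $$ (i*2^k+c, j*2^k+c')"
    if "i < 2^n" "j < 2^n" "c < 2^k" "c' < 2^k" for i j c c'
  proof -
    have l: "i*2^k+c < 2^(n+k)" "j*2^k+c' < 2^(n+k)" using that p2 by (auto intro!: lt_comb)
    have "?Bm $$ (i*2^k+c, j*2^k+c') = UNc $$ (i*2^k+c, j*2^k+c')"
      by (rule block_extract[OF UNcc l])
    moreover have "?A $$ (i*2^k+c, j*2^k+c') = N (emat (2^n) j i) $$ (c,c')"
      by (rule choiT_entry) (use that in auto)
    moreover have "D $$ (i*2^k+c, j*2^k+c') = ?A $$ (i*2^k+c, j*2^k+c') - complex_of_real \<alpha> * ?Bm $$ (i*2^k+c, j*2^k+c')"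
      using l unfolding D_def by (simp del: index_mult_mat(1) add: ptranspose1_def)
    ultimately show ?thesis by simp
  qed
  have eq: "N \<rho> - complex_of_real \<alpha> \<cdot>\<^sub>m (kron (bra0 (m+r+n)) (1\<^sub>m (2^k)) * ?V * kron (ket0 (m+r+n)) (1\<^sub>m (2^k)))
     = mat (2^k) (2^k) (\<lambda>(c,c'). \<Sum>a<2^r. \<Sum>i<2^n. \<Sum>j<2^n. cnj (\<psi>(a*2^n+i)) * \<psi>(a*2^n+j) * D$$(i*2^k+c, j*2^k+c'))"
  proof (rule eq_matI)
    have Nc: "N \<rho> \<in> carrier_mat (2^k) (2^k)" using N_lin rhoc unfolding lin_map_def by auto
    fix c c' assume "c < dim_row (mat (2^k) (2^k) (\<lambda>(c,c'). \<Sum>a<2^r. \<Sum>i<2^n. \<Sum>j<2^n. cnj (\<psi>(a*2^n+i)) * \<psi>(a*2^n+j) * D$$(i*2^k+c, j*2^k+c')))"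
      "c' < dim_col (mat (2^k) (2^k) (\<lambda>(c,c'). \<Sum>a<2^r. \<Sum>i<2^n. \<Sum>j<2^n. cnj (\<psi>(a*2^n+i)) * \<psi>(a*2^n+j) * D$$(i*2^k+c, j*2^k+c')))"
    then have c: "c < 2^k" "c' < 2^k" by auto
    have "(N \<rho> - complex_of_real \<alpha> \<cdot>\<^sub>m (kron (bra0 (m+r+n)) (1\<^sub>m (2^k)) * ?V * kron (ket0 (m+r+n)) (1\<^sub>m (2^k)))) $$ (c,c')
      = N \<rho> $$ (c,c') - complex_of_real \<alpha> * (kron (bra0 (m+r+n)) (1\<^sub>m (2^k)) * ?V * kron (ket0 (m+r+n)) (1\<^sub>m (2^k))) $$ (c,c')"
      using c Nc by simp
    also have "\<dots> = (\<Sum>i<2^n. \<Sum>j<2^n. (\<Sum>a<2^r. \<psi>(a*2^n+i) * cnj (\<psi>(a*2^n+j))) * N (emat (2^n) i j) $$ (c,c'))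
       - complex_of_real \<alpha> * (\<Sum>a<2^r. \<Sum>i<2^n. \<Sum>j<2^n. cnj (\<psi>(a*2^n+i)) * \<psi>(a*2^n+j) * UNc$$(i*2^k+c, j*2^k+c'))"
      using lin_expand[OF N_lin rhoc c] rho_ent Vent[OF c] by simp
    also have "\<dots> = (\<Sum>a<2^r. \<Sum>i<2^n. \<Sum>j<2^n. cnj (\<psi>(a*2^n+i)) * \<psi>(a*2^n+j) *
        (N (emat (2^n) j i) $$ (c,c') - complex_of_real \<alpha> * UNc$$(i*2^k+c, j*2^k+c')))"
      by (rule combine)
    also have "\<dots> = (\<Sum>a<2^r. \<Sum>i<2^n. \<Sum>j<2^n. cnj (\<psi>(a*2^n+i)) * \<psi>(a*2^n+j) * D$$(i*2^k+c, j*2^k+c'))"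
      using c by (intro sum.cong refl) (simp add: Dent)
    finally show "(N \<rho> - complex_of_real \<alpha> \<cdot>\<^sub>m (kron (bra0 (m+r+n)) (1\<^sub>m (2^k)) * ?V * kron (ket0 (m+r+n)) (1\<^sub>m (2^k)))) $$ (c,c')
      = mat (2^k) (2^k) (\<lambda>(c,c'). \<Sum>a<2^r. \<Sum>i<2^n. \<Sum>j<2^n. cnj (\<psi>(a*2^n+i)) * \<psi>(a*2^n+j) * D$$(i*2^k+c, j*2^k+c')) $$ (c,c')"
      using c by simp
  next
    show "dim_row (N \<rho> - complex_of_real \<alpha> \<cdot>\<^sub>m (kron (bra0 (m+r+n)) (1\<^sub>m (2^k)) * ?V * kron (ket0 (m+r+n)) (1\<^sub>m (2^k))))
      = dim_row (mat (2^k) (2^k) (\<lambda>(c,c'). \<Sum>a<2^r. \<Sum>i<2^n. \<Sum>j<2^n. cnj (\<psi>(a*2^n+i)) * \<psi>(a*2^n+j) * D$$(i*2^k+c, j*2^k+c')))"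
      using N_lin rhoc unfolding lin_map_def by auto
  next
    show "dim_col (N \<rho> - complex_of_real \<alpha> \<cdot>\<^sub>m (kron (bra0 (m+r+n)) (1\<^sub>m (2^k)) * ?V * kron (ket0 (m+r+n)) (1\<^sub>m (2^k))))
      = dim_col (mat (2^k) (2^k) (\<lambda>(c,c'). \<Sum>a<2^r. \<Sum>i<2^n. \<Sum>j<2^n. cnj (\<psi>(a*2^n+i)) * \<psi>(a*2^n+j) * D$$(i*2^k+c, j*2^k+c')))"
      using N_lin rhoc unfolding lin_map_def by auto
  qed
  have psi1: "(\<Sum>s<2^r*2^n. (cmod (\<psi> s))^2) = 1"
    using psi_norm[OF Urho] p2 unfolding \<psi>_def by simp
  have "op_norm (N \<rho> - complex_of_real \<alpha> \<cdot>\<^sub>m (kron (bra0 (m+r+n)) (1\<^sub>m (2^k)) * ?V * kron (ket0 (m+r+n)) (1\<^sub>m (2^k)))) \<le> \<epsilon>"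
    unfolding eq by (rule norm_main[OF Dc Dn e0 psi1]) simp_all
  moreover have "N \<rho> \<in> carrier_mat (2^k) (2^k)" using N_lin rhoc unfolding lin_map_def by auto
  ultimately show ?thesis unfolding block_encoding_def using a0 e0 uV by auto
qed


end
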